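(* (1) Let $a\in B(H)$. If $a^2=a$ and $\|a\|\le1$, then $a^*=a$, i.e., $a$ is an orthogonal projection. (2) Let $p\in B(H)$ be an orthogonal projection and let $b,c\in B(H)$ satisfy $c^*b=p$ and $\|b+c\|\le2$. Then $\ker p\subset\ker b\cap\ker c$ if and only if $b=c$. In this case, $\ker p=\ker b=\ker c$.
   Context: $H$ is a Hilbert space and $B(H)$ the bounded operators on $H$. *)

theory Defs
  imports "HOL-Analysis.Analysis"
begin

class complex_vector = real_vector +
  fixes scaleC :: "complex \<Rightarrow> 'a \<Rightarrow> 'a" (infixr \<open>*\<^sub>C\<close> 75)
  assumes scaleC_add_right: "a *\<^sub>C (x + y) = a *\<^sub>C x + a *\<^sub>C y"
    and scaleC_add_left: "(a + b) *\<^sub>C x = a *\<^sub>C x + b *\<^sub>C x"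
    and scaleC_scaleC: "a *\<^sub>C (b *\<^sub>C x) = (a * b) *\<^sub>C x"
    and scaleC_one: "1 *\<^sub>C x = x"
    and scaleR_scaleC: "scaleR r x = complex_of_real r *\<^sub>C x"

class complex_inner = complex_vector + real_normed_vector +
  fixes cinner :: "'a \<Rightarrow> 'a \<Rightarrow> complex"
  assumes cinner_commute: "cinner x y = cnj (cinner y x)"
    and cinner_add_left: "cinner (x + y) z = cinner x z + cinner y z"
    and cinner_scaleC_left: "cinner (r *\<^sub>C x) y = cnj r * cinner x y"
    and cinner_self_real: "Im (cinner x x) = 0"
    and cinner_self_nonneg: "0 \<le> Re (cinner x x)"
    and cinner_self_eq_zero: "cinner x x = 0 \<longleftrightarrow> x = 0"
    and norm_eq_sqrt_cinner: "norm x = sqrt (Re (cinner x x))"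

class chilbert_space = complex_inner + complete_space

definition bounded_clinear :: "('a::complex_inner \<Rightarrow> 'b::complex_inner) \<Rightarrow> bool" where
  "bounded_clinear f \<longleftrightarrow> bounded_linear f \<and> (\<forall>c x. f (c *\<^sub>C x) = c *\<^sub>C f x)"

definition cadjoint :: "('a::complex_inner \<Rightarrow> 'b::complex_inner) \<Rightarrow> 'b \<Rightarrow> 'a" where
  "cadjoint f = (SOME g. \<forall>x y. cinner (f x) y = cinner x (g y))"

definition ker :: "('a \<Rightarrow> 'b::zero) \<Rightarrow> 'a set" where
  "ker f = {x. f x = 0}"

definition is_orth_proj :: "('a::complex_inner \<Rightarrow> 'a) \<Rightarrow> bool" where
  "is_orth_proj p \<longleftrightarrow> bounded_clinear p \<and> p \<circ> p = p \<and> cadjoint p = p"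

end

theory Submission
  imports Defs
begin

lemma cinner_add_right: "cinner x (y + z) = cinner x y + cinner x (z::'a::complex_inner)"
  by (metis cinner_commute cinner_add_left complex_cnj_add)

lemma cinner_scaleC_right: "cinner x (r *\<^sub>C y) = r * cinner x (y::'a::complex_inner)"
  by (metis cinner_commute cinner_scaleC_left complex_cnj_mult complex_cnj_cnj)

lemma cinner_scaleR_left: "cinner (r *\<^sub>R x) y = of_real r * cinner x (y::'a::complex_inner)"
  by (simp add: scaleR_scaleC cinner_scaleC_left)

lemma cinner_scaleR_right: "cinner x (r *\<^sub>R y) = of_real r * cinner x (y::'a::complex_inner)"
  by (simp add: scaleR_scaleC cinner_scaleC_right)

lemma cinner_zero_left[simp]: "cinner 0 (y::'a::complex_inner) = 0"
  using cinner_scaleR_left[of 0 "0::'a" y] by simp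

lemma cinner_zero_right[simp]: "cinner x (0::'a::complex_inner) = 0"
  using cinner_scaleR_right[of x 0 "0::'a"] by simp

lemma cinner_minus_left: "cinner (- x) (y::'a::complex_inner) = - cinner x y"
  using cinner_scaleR_left[of "-1" x y] by simp

lemma cinner_minus_right: "cinner x (- y::'a::complex_inner) = - cinner x y"
  using cinner_scaleR_right[of x "-1" y] by simp

lemma cinner_diff_left: "cinner (x - y) (z::'a::complex_inner) = cinner x z - cinner y z"
  by (simp only: diff_conv_add_uminus cinner_add_left cinner_minus_left)

lemma cinner_diff_right: "cinner x (y - z::'a::complex_inner) = cinner x y - cinner x z"
  by (simp only: diff_conv_add_uminus cinner_add_right cinner_minus_right)

lemma norm_sq: "(norm (x::'a::complex_inner))^2 = Re (cinner x x)"
  by (simp add: norm_eq_sqrt_cinner cinner_self_nonneg)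

lemma re_cinner_commute: "Re (cinner y x) = Re (cinner x (y::'a::complex_inner))"
  by (subst cinner_commute) simp

lemma norm_add_sq: "(norm (x + y))^2 = (norm x)^2 + (norm y)^2 + 2 * Re (cinner x (y::'a::complex_inner))"
  unfolding norm_sq by (simp add: cinner_add_left cinner_add_right re_cinner_commute[of y x])

lemma norm_diff_sq: "(norm (x - y))^2 = (norm x)^2 + (norm y)^2 - 2 * Re (cinner x (y::'a::complex_inner))"
  unfolding norm_sq by (simp add: cinner_diff_left cinner_diff_right re_cinner_commute[of y x])

lemma re_cinner_scaleR_right: "Re (cinner x (t *\<^sub>R y)) = t * Re (cinner x (y::'a::complex_inner))"
  by (simp add: cinner_scaleR_right)

lemma re_cinner_scaleR_left: "Re (cinner (t *\<^sub>R x) y) = t * Re (cinner x (y::'a::complex_inner))"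
  by (simp add: cinner_scaleR_left)

lemma orth_from_min:
  fixes w k :: "'a::complex_inner"
  assumes "\<And>t::real. (norm w)^2 \<le> (norm (w + t *\<^sub>R k))^2"
  shows "Re (cinner w k) = 0"
proof (cases "k = 0")
  case True then show ?thesis by simp
next
  case False
  define r where "r = Re (cinner w k)"
  define n where "n = (norm k)^2"
  have n: "n > 0" using False by (simp add: n_def)
  have "(norm w)^2 \<le> (norm (w + (- r / n) *\<^sub>R k))^2" by (rule assms)
  also have "\<dots> = (norm w)^2 + (r/n)^2 * n - 2 * (r / n) * r"
    by (simp only: norm_add_sq) (simp add: cinner_minus_right re_cinner_scaleR_right power2_eq_square n_def r_def)
  finally have "0 \<le> (r/n)^2 * n - 2 * (r/n) * r" by simp
  also have "(r/n)^2 * n - 2 * (r/n) * r = - (r^2 / n)" using n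
    by (simp add: power2_eq_square field_simps)
  finally have "r^2 / n \<le> 0" by simp
  with n have "r^2 \<le> 0" by (simp add: divide_le_0_iff)
  then show ?thesis unfolding r_def[symmetric] by simp
qed

lemma re_cs:
  fixes x y :: "'a::complex_inner"
  shows "\<bar>Re (cinner x y)\<bar> \<le> norm x * norm y"
proof (cases "y = 0")
  case True then show ?thesis by simp
next
  case False
  define r where "r = Re (cinner x y)"
  define n where "n = (norm y)^2"
  have n: "n > 0" using False by (simp add: n_def)
  have "0 \<le> (norm (x + (- r / n) *\<^sub>R y))^2" by simp
  also have "\<dots> = (norm x)^2 + (r/n)^2 * n - 2 * (r / n) * r"
    by (simp only: norm_add_sq) (simp add: cinner_minus_right re_cinner_scaleR_right power2_eq_square n_def r_def)
  finally have h: "0 \<le> (norm x)^2 + ((r/n)^2 * n - 2 * (r / n) * r)" by simp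
  have "(r/n)^2 * n - 2 * (r/n) * r = - (r^2 / n)" using n
    by (simp add: power2_eq_square field_simps)
  with h have "r^2 / n \<le> (norm x)^2" by simp
  with n have "r^2 \<le> (norm x)^2 * n" by (simp add: divide_le_eq)
  then have "r^2 \<le> (norm x * norm y)^2" by (simp add: n_def power_mult_distrib)
  then show ?thesis unfolding r_def[symmetric]
    using abs_le_square_iff by (metis abs_mult abs_norm_cancel)
qed


lemma parallelogram:
  fixes a b :: "'a::complex_inner"
  shows "(norm (a - b))^2 = 2 * (norm a)^2 + 2 * (norm b)^2 - (norm (a + b))^2"
  by (simp add: norm_add_sq norm_diff_sq)

lemma closest_point_exists:
  fixes x0 :: "'a::chilbert_space"
  assumes cl: "closed K" and mid: "\<And>a b. a \<in> K \<Longrightarrow> b \<in> K \<Longrightarrow> (1/2) *\<^sub>R (a + b) \<in> K"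
    and ne: "K \<noteq> {}"
  shows "\<exists>k0\<in>K. \<forall>k\<in>K. norm (x0 - k0) \<le> norm (x0 - k)"
proof -
  define D where "D = (\<lambda>k. norm (x0 - k)) ` K"
  define d where "d = Inf D"
  have Dne: "D \<noteq> {}" using ne by (simp add: D_def)
  have bdd: "bdd_below D" unfolding D_def by (rule bdd_belowI[of _ 0]) auto
  have dle: "d \<le> norm (x0 - k)" if "k \<in> K" for k
    unfolding d_def D_def using bdd that by (simp add: D_def cInf_lower)
  have d0: "0 \<le> d" unfolding d_def using Dne by (rule cInf_greatest) (auto simp: D_def)
  have "\<exists>k\<in>K. (norm (x0 - k))^2 \<le> d^2 + inverse (real (Suc n))" for n
  proof -
    define s where "s = sqrt (d^2 + inverse (real (Suc n)))"
    have "d^2 < d^2 + inverse (real (Suc n))" by simp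
    then have "sqrt (d^2) < s" unfolding s_def by (rule real_sqrt_less_mono)
    with d0 have "d < s" by simp
    then have "Inf D < s" by (simp add: d_def)
    then obtain y where "y \<in> D" "y < s" using cInf_less_iff[OF Dne bdd] by blast
    then obtain k where k: "k \<in> K" "norm (x0 - k) < s" by (auto simp: D_def)
    then have "(norm (x0 - k))^2 \<le> s^2" by (intro power_mono) auto
    also have "s^2 = d^2 + inverse (real (Suc n))" unfolding s_def
      by (simp add: add_nonneg_nonneg)
    finally show ?thesis using k by blast
  qed
  then obtain kk where kkK: "\<And>n. kk n \<in> K"
    and kkb: "\<And>n. (norm (x0 - kk n))^2 \<le> d^2 + inverse (real (Suc n))" by metis
  have cb: "(norm (kk m - kk n))^2 \<le> 2 * inverse (real (Suc m)) + 2 * inverse (real (Suc n))" for m n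
  proof -
    define a where "a = x0 - kk n"
    define b where "b = x0 - kk m"
    have mK: "(1/2) *\<^sub>R (kk m + kk n) \<in> K" using mid kkK by blast
    have "a + b = 2 *\<^sub>R (x0 - (1/2) *\<^sub>R (kk m + kk n))"
      by (simp add: a_def b_def algebra_simps scaleR_2)
    then have "(norm (a + b))^2 = 4 * (norm (x0 - (1/2) *\<^sub>R (kk m + kk n)))^2"
      by (simp add: power_mult_distrib)
    moreover have "d^2 \<le> (norm (x0 - (1/2) *\<^sub>R (kk m + kk n)))^2"
      using dle[OF mK] d0 by (intro power_mono) auto
    ultimately have "4 * d^2 \<le> (norm (a + b))^2" by simp
    moreover have "a - b = kk m - kk n" by (simp add: a_def b_def)
    moreover note parallelogram[of a b] kkb[of n] kkb[of m]
    ultimately show ?thesis by (simp add: a_def b_def)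
  qed
  have "Cauchy kk"
  proof (rule metric_CauchyI)
    fix e :: real assume e: "0 < e"
    obtain N where N: "inverse (real (Suc N)) < e^2 / 4"
      using e reals_Archimedean[of "e^2/4"] by auto
    have "dist (kk m) (kk n) < e" if "m \<ge> N" "n \<ge> N" for m n
    proof -
      have "inverse (real (Suc m)) \<le> inverse (real (Suc N))"
        using that by (simp add: le_imp_inverse_le)
      moreover have "inverse (real (Suc n)) \<le> inverse (real (Suc N))"
        using that by (simp add: le_imp_inverse_le)
      ultimately have "(norm (kk m - kk n))^2 < e^2"
        using cb[of m n] N by linarith
      then have "(dist (kk m) (kk n))^2 < e^2" by (simp add: dist_norm)
      then show ?thesis using e by (simp add: power_less_imp_less_base)
    qed
    then show "\<exists>M. \<forall>m\<ge>M. \<forall>n\<ge>M. dist (kk m) (kk n) < e" by blast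
  qed
  then obtain k0 where lim: "kk \<longlonglongrightarrow> k0" using Cauchy_convergent_iff convergent_def by blast
  have k0K: "k0 \<in> K" using closed_sequentially[OF cl kkK lim] .
  have l1: "(\<lambda>n. (norm (x0 - kk n))^2) \<longlonglongrightarrow> (norm (x0 - k0))^2"
    by (intro tendsto_intros lim)
  have l2: "(\<lambda>n. d^2 + inverse (real (Suc n))) \<longlonglongrightarrow> d^2 + 0"
    by (intro tendsto_intros LIMSEQ_inverse_real_of_nat)
  have "(norm (x0 - k0))^2 \<le> d^2 + 0"
    by (rule LIMSEQ_le[OF l1 l2]) (use kkb in auto)
  then have "norm (x0 - k0) \<le> d" using d0 by (simp add: power2_le_iff_abs_le)
  then show ?thesis using k0K dle by force
qed

lemma riesz_real:
  fixes \<psi> :: "'a::chilbert_space \<Rightarrow> real"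
  assumes bl: "bounded_linear \<psi>"
  shows "\<exists>z. \<forall>x. \<psi> x = Re (cinner z x)"
proof (cases "\<forall>x. \<psi> x = 0")
  case True then show ?thesis by (intro exI[of _ 0]) simp
next
  case False
  then obtain x0 where x0: "\<psi> x0 \<noteq> 0" by blast
  interpret bounded_linear \<psi> by (rule bl)
  define K where "K = {x. \<psi> x = 0}"
  have cl: "closed K" unfolding K_def
    by (rule closed_Collect_eq) (auto intro: linear_continuous_on bl)
  have mid: "(1/2) *\<^sub>R (a + b) \<in> K" if "a \<in> K" "b \<in> K" for a b
    using that by (simp add: K_def scale add)
  have ne: "K \<noteq> {}" unfolding K_def using zero by blast
  obtain k0 where k0: "k0 \<in> K" and mn: "\<And>k. k \<in> K \<Longrightarrow> norm (x0 - k0) \<le> norm (x0 - k)"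
    using closest_point_exists[OF cl mid ne, of x0] by blast
  define w where "w = x0 - k0"
  have pw: "\<psi> w = \<psi> x0" using k0 by (simp add: w_def diff K_def)
  then have wne: "w \<noteq> 0" using x0 zero by auto
  have orth: "Re (cinner w k) = 0" if k: "k \<in> K" for k
  proof (rule orth_from_min)
    fix t :: real
    have "k0 - t *\<^sub>R k \<in> K" using k k0 by (simp add: K_def diff scale)
    then have "norm w \<le> norm (w + t *\<^sub>R k)" using mn[of "k0 - t *\<^sub>R k"]
      by (simp add: w_def algebra_simps)
    then show "(norm w)^2 \<le> (norm (w + t *\<^sub>R k))^2" by (simp add: power_mono)
  qed
  define n where "n = (norm w)^2"
  have n: "n > 0" using wne by (simp add: n_def)
  show ?thesis
  proof (intro exI allI)
    fix x
    have "\<psi> x *\<^sub>R w - \<psi> w *\<^sub>R x \<in> K" by (simp add: K_def diff scale)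
    then have "Re (cinner w (\<psi> x *\<^sub>R w - \<psi> w *\<^sub>R x)) = 0" by (rule orth)
    then have "\<psi> x * n = \<psi> w * Re (cinner w x)"
      by (simp add: cinner_diff_right re_cinner_scaleR_right n_def norm_sq)
    then have "\<psi> x = (\<psi> w / n) * Re (cinner w x)" using n by (simp add: field_simps)
    then show "\<psi> x = Re (cinner ((\<psi> w / n) *\<^sub>R w) x)" by (simp add: re_cinner_scaleR_left)
  qed
qed


lemma riesz_complex:
  fixes f :: "'a::chilbert_space \<Rightarrow> 'a"
  assumes f: "bounded_clinear f"
  shows "\<exists>z. \<forall>x. cinner y (f x) = cinner z x"
proof -
  have bl: "bounded_linear f" and cl: "\<And>c x. f (c *\<^sub>C x) = c *\<^sub>C f x"
    using f by (auto simp: bounded_clinear_def)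
  interpret f: bounded_linear f by (rule bl)
  obtain B where B: "\<And>x. norm (f x) \<le> norm x * B" "B > 0" using f.pos_bounded by blast
  have "bounded_linear (\<lambda>x. Re (cinner y (f x)))"
  proof (rule bounded_linear_intro[where K = "norm y * B"])
    fix x1 x2 show "Re (cinner y (f (x1 + x2))) = Re (cinner y (f x1)) + Re (cinner y (f x2))"
      by (simp add: f.add cinner_add_right)
  next
    fix r x show "Re (cinner y (f (r *\<^sub>R x))) = r *\<^sub>R Re (cinner y (f x))"
      by (simp add: f.scale re_cinner_scaleR_right)
  next
    fix x
    have "norm (Re (cinner y (f x))) \<le> norm y * norm (f x)" using re_cs[of y "f x"] by simp
    also have "\<dots> \<le> norm y * (norm x * B)" using B by (simp add: mult_left_mono)
    finally show "norm (Re (cinner y (f x))) \<le> norm x * (norm y * B)" by (simp add: ac_simps)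
  qed
  then obtain z where z: "\<And>x. Re (cinner y (f x)) = Re (cinner z x)" using riesz_real by blast
  show ?thesis
  proof (intro exI allI complex_eqI)
    fix x
    show "Re (cinner y (f x)) = Re (cinner z x)" by (rule z)
    have "Re (cinner y (f (\<i> *\<^sub>C x))) = Re (cinner z (\<i> *\<^sub>C x))" by (rule z)
    then show "Im (cinner y (f x)) = Im (cinner z x)"
      by (simp add: cl cinner_scaleC_right)
  qed
qed

lemma adjoint_exists:
  fixes f :: "'a::chilbert_space \<Rightarrow> 'a"
  assumes f: "bounded_clinear f"
  shows "\<exists>g. \<forall>x y. cinner (f x) y = cinner x (g y)"
proof -
  have "\<forall>y. \<exists>z. \<forall>x. cinner y (f x) = cinner z x" using riesz_complex[OF f] by blast
  then obtain g where g: "\<And>y x. cinner y (f x) = cinner (g y) x" by metis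
  have "cinner (f x) y = cinner x (g y)" for x y
    by (metis cinner_commute g)
  then show ?thesis by blast
qed

lemma cadjoint_prop:
  fixes f :: "'a::chilbert_space \<Rightarrow> 'a"
  assumes f: "bounded_clinear f"
  shows "cinner (f x) y = cinner x (cadjoint f y)"
proof -
  have "\<forall>x y. cinner (f x) y = cinner x (cadjoint f y)"
    unfolding cadjoint_def using someI_ex[OF adjoint_exists[OF f]] .
  then show ?thesis by blast
qed

lemma cinner_ext:
  fixes u v :: "'a::complex_inner"
  assumes "\<And>x. cinner x u = cinner x v"
  shows "u = v"
proof -
  have "cinner (u - v) (u - v) = 0" using assms[of "u - v"] by (simp add: cinner_diff_right)
  then have "u - v = 0" using cinner_self_eq_zero by blast
  then show ?thesis by simp
qed

lemma cadjoint_unique: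
  fixes f g :: "'a::complex_inner \<Rightarrow> 'a"
  assumes g: "\<And>x y. cinner (f x) y = cinner x (g y)"
  shows "cadjoint f = g"
proof -
  have ex: "\<exists>g. \<forall>x y. cinner (f x) y = cinner x (g y)" using g by blast
  have h: "\<forall>x y. cinner (f x) y = cinner x (cadjoint f y)"
    unfolding cadjoint_def using someI_ex[OF ex] .
  show ?thesis
  proof
    fix y show "cadjoint f y = g y" by (rule cinner_ext) (metis h g)
  qed
qed


lemma scaleC_zero_right: "r *\<^sub>C (0::'a::complex_vector) = 0"
proof -
  have "r *\<^sub>C (0::'a) = r *\<^sub>C 0 + r *\<^sub>C 0" by (metis add_0 scaleC_add_right)
  then show ?thesis by simp
qed

lemma part1:
  fixes a :: "'a::chilbert_space \<Rightarrow> 'a"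
  assumes ac: "bounded_clinear a" and idem: "a \<circ> a = a" and on: "onorm a \<le> 1"
  shows "cadjoint a = a"
proof -
  have bl: "bounded_linear a" and cl: "\<And>c x. a (c *\<^sub>C x) = c *\<^sub>C a x"
    using ac by (auto simp: bounded_clinear_def)
  interpret a: bounded_linear a by (rule bl)
  have aa: "a (a x) = a x" for x using idem by (metis comp_apply)
  have contr: "norm (a v) \<le> norm v" for v
  proof -
    have "norm (a v) \<le> onorm a * norm v" by (rule onorm[OF bl])
    also have "\<dots> \<le> 1 * norm v" using on by (intro mult_right_mono) auto
    finally show ?thesis by simp
  qed
  have re0: "Re (cinner u y) = 0" if u: "a u = u" and y: "a y = 0" for u y
  proof (rule orth_from_min)
    fix t :: real
    have "a (u + t *\<^sub>R y) = u" using u y by (simp add: a.add a.scale)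
    then have "norm u \<le> norm (u + t *\<^sub>R y)" using contr[of "u + t *\<^sub>R y"] by simp
    then show "(norm u)^2 \<le> (norm (u + t *\<^sub>R y))^2" by (simp add: power_mono)
  qed
  have orth: "cinner u y = 0" if u: "a u = u" and y: "a y = 0" for u y
  proof (rule complex_eqI)
    show "Re (cinner u y) = Re 0" using re0[OF u y] by simp
    have "a (\<i> *\<^sub>C y) = 0" using y cl[of "\<i>" y] by (simp add: scaleC_zero_right)
    then have "Re (cinner u (\<i> *\<^sub>C y)) = 0" using re0[OF u] by blast
    then show "Im (cinner u y) = Im 0" by (simp add: cinner_scaleC_right)
  qed
  have "cinner (a x) y = cinner x (a y)" for x y
  proof -
    have k1: "a (y - a y) = 0" by (simp add: a.diff aa)
    have k2: "a (x - a x) = 0" by (simp add: a.diff aa)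
    have "cinner (a x) y = cinner (a x) (a y + (y - a y))" by simp
    also have "\<dots> = cinner (a x) (a y)" by (simp only: cinner_add_right orth[OF aa k1] add_0_right)
    also have "\<dots> = cinner (a x + (x - a x)) (a y) - cinner (x - a x) (a y)"
      by (simp only: cinner_add_left add_diff_cancel)
    also have "cinner (x - a x) (a y) = 0"
      using orth[OF aa[of y] k2] by (metis cinner_commute complex_cnj_zero)
    finally show ?thesis by simp
  qed
  then show ?thesis by (rule cadjoint_unique)
qed

lemma part2:
  fixes p b c :: "'a::chilbert_space \<Rightarrow> 'a"
  assumes pp: "is_orth_proj p" and bc: "bounded_clinear b" and cc: "bounded_clinear c"
    and cbp: "cadjoint c \<circ> b = p" and on: "onorm (\<lambda>x. b x + c x) \<le> 2"
  shows "(ker p \<subseteq> ker b \<inter> ker c \<longleftrightarrow> b = c) \<and> (b = c \<longrightarrow> ker p = ker b \<and> ker p = ker c)"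
proof -
  have pc: "bounded_clinear p" and pidem: "p \<circ> p = p" and padj: "cadjoint p = p"
    using pp by (auto simp: is_orth_proj_def)
  have blp: "bounded_linear p" using pc by (simp add: bounded_clinear_def)
  interpret p: bounded_linear p by (rule blp)
  have blb: "bounded_linear b" using bc by (simp add: bounded_clinear_def)
  interpret b: bounded_linear b by (rule blb)
  have blc: "bounded_linear c" using cc by (simp add: bounded_clinear_def)
  interpret c: bounded_linear c by (rule blc)
  have pp2: "p (p x) = p x" for x using pidem by (metis comp_apply)
  have psa: "cinner (p x) y = cinner x (p y)" for x y using cadjoint_prop[OF pc, of x y] padj by simp
  have key: "cinner (c y) (b x) = cinner y (p x)" for x y
    using cadjoint_prop[OF cc, of y "b x"] cbp by (metis comp_apply)
  have bnd: "norm (b x + c x) \<le> 2 * norm x" for x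
  proof -
    have "bounded_linear (\<lambda>x. b x + c x)" by (rule bounded_linear_add[OF blb blc])
    then have "norm (b x + c x) \<le> onorm (\<lambda>x. b x + c x) * norm x" by (rule onorm)
    also have "\<dots> \<le> 2 * norm x" using on by (intro mult_right_mono) auto
    finally show ?thesis .
  qed
  have dir1: "b = c" if kk: "ker p \<subseteq> ker b \<inter> ker c"
  proof
    fix x
    define u where "u = p x"
    have "p (x - u) = 0" by (simp add: u_def p.diff pp2)
    then have "b (x - u) = 0" "c (x - u) = 0" using kk by (auto simp: ker_def)
    then have bx: "b x = b u" and cx: "c x = c u" by (simp_all add: b.diff c.diff)
    have pu: "p u = u" by (simp add: u_def pp2)
    have "Re (cinner (b u) (c u)) = Re (cinner (c u) (b u))" by (rule re_cinner_commute)
    also have "\<dots> = (norm u)^2" using key[of u u] pu by (simp add: norm_sq)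
    finally have r: "Re (cinner (b u) (c u)) = (norm u)^2" .
    have "(norm (b u + c u))^2 \<le> (2 * norm u)^2" by (rule power_mono) (use bnd[of u] in auto)
    then have "(norm (b u - c u))^2 \<le> 0"
      using norm_add_sq[of "b u" "c u"] norm_diff_sq[of "b u" "c u"] r
      by (simp add: power_mult_distrib)
    then have "b u - c u = 0" by simp
    then show "b x = c x" using bx cx by simp
  qed
  have dir2: "ker p = ker b" if bc_eq: "b = c"
  proof -
    have "(norm (b x))^2 = (norm (p x))^2" for x
    proof -
      have "(norm (b x))^2 = Re (cinner x (p x))" using key[of x x] bc_eq by (simp add: norm_sq)
      also have "cinner x (p x) = cinner (p x) (p x)" using psa[of x "p x"] pp2 by simp
      finally show ?thesis by (simp add: norm_sq)
    qed
    note h = this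
    have "b x = 0 \<longleftrightarrow> p x = 0" for x
    proof -
      have "b x = 0 \<longleftrightarrow> (norm (b x))^2 = 0" by simp
      also have "\<dots> \<longleftrightarrow> (norm (p x))^2 = 0" by (simp only: h)
      also have "\<dots> \<longleftrightarrow> p x = 0" by simp
      finally show ?thesis .
    qed
    then show ?thesis by (auto simp: ker_def)
  qed
  show ?thesis
  proof (intro conjI iffI impI)
    assume "ker p \<subseteq> ker b \<inter> ker c" then show "b = c" by (rule dir1)
  next
    assume e: "b = c" then show "ker p \<subseteq> ker b \<inter> ker c" using dir2[OF e] by simp
  next
    assume e: "b = c" then show "ker p = ker b" by (rule dir2)
  next
    assume e: "b = c" then show "ker p = ker c" using dir2[OF e] by simp
  qed
qed

theorem lemma4p1:
  fixes a p b c :: "'a::chilbert_space \<Rightarrow> 'a"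
  shows "(bounded_clinear a \<and> a \<circ> a = a \<and> onorm a \<le> 1 \<longrightarrow> cadjoint a = a)
    \<and> (is_orth_proj p \<and> bounded_clinear b \<and> bounded_clinear c
         \<and> cadjoint c \<circ> b = p \<and> onorm (\<lambda>x. b x + c x) \<le> 2
       \<longrightarrow> (ker p \<subseteq> ker b \<inter> ker c \<longleftrightarrow> b = c)
         \<and> (b = c \<longrightarrow> ker p = ker b \<and> ker p = ker c))"
  using part1[of a] part2[of p b c] by blast

end
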